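(* Fix a dyadic cube $R$. Suppose $(Q_1,k_1),\dots,(Q_c,k_c)$ are pairwise distinct pairs, where each $k_l$ is an integer, $Q_l\in\mathcal Q^3_{k_l}$, and $R\in\mathcal R_{k_l}(Q_l)$. Then $c\lesssim1$, with implied constant depending only on the dimension $d$ and on $\eta$.
   Context: Setting: $\mathcal D$ a dyadic grid in $\mathbb R^d$, $\mathcal Q\subset\mathcal D$, $\tau=\{\tau_P\}_{P\in\mathcal Q}$ nonnegative constants, $\sigma,w$ weights (positive locally integrable functions), $1<q<\infty$, $f\ge0$ bounded with compact support, and $0<\eta<1$ a fixed parameter. $\mathbb E_P(g)=|P|^{-1}\int_P g$; $\overline T(f\sigma)(x)=\big(\sum_{P\in\mathcal Q}|\tau_P\mathbb E_P(f\sigma)\mathbf 1_P(x)|^q\big)^{1/q}$; $U(\{g_Pw\}_{P\in\mathcal Q})(x)=\sum_{P\in\mathcal Q}\mathbb E_P(g_Pw)\tau_P\mathbf 1_P(x)$; $a_P=(\mathbb E_P(f\sigma)\tau_P)^{q-1}\mathbf 1_P\,(\overline T(f\sigma))^{-1/q'}$ with $1/q+1/q'=1$. $\Omega_k=\{\overline T(f\sigma)>2^k\}$; $Q^{(1)}$ is the dyadic parent of $Q$ and $Q^{(j+1)}=(Q^{(j)})^{(1)}$. For each $k$, $\mathcal Q_k$ is a collection of pairwise disjoint dyadic cubes with $\Omega_k=\bigcup_{Q\in\mathcal Q_k}Q$; $Q^{(1)}\subset\Omega_k$, $Q^{(2)}\cap\Omega_k^c\ne\emptyset$ for $Q\in\mathcal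 Q_k$; $\sum_{Q\in\mathcal Q_k}\mathbf 1_{Q^{(1)}}\lesssim\mathbf 1_{\Omega_k}$; $\sup_{Q\in\mathcal Q_k}\#\{Q'\in\mathcal Q_k:Q'\cap Q^{(1)}\ne\emptyset\}\lesssim1$; $Q\in\mathcal Q_k$, $Q'\in\mathcal Q_l$, $Q\subsetneq Q'$ implies $k>l$. For $Q\in\mathcal Q_k$: $E_k(Q)=Q\cap(\Omega_{k+2}\setminus\Omega_{k+3})$, $\alpha_k(Q)=\int_{Q^{(1)}\setminus\Omega_{k+3}}f\,U(\{a_P\mathbf 1_{E_k(Q)}w\}_{P\in\mathcal Q})\sigma$, $\beta_k(Q)=\int_{Q^{(1)}\cap\Omega_{k+3}}f\,U(\{a_P\mathbf 1_{E_k(Q)}w\}_{P\in\mathcal Q})\sigma$; $\mathcal Q_k^3$ is the set of $Q\in\mathcal Q_k$ with $w(E_k(Q))>\eta w(Q)$ and $\alpha_k(Q)\le\beta_k(Q)$; and $\mathcal R_k(Q)=\{R\in\mathcal Q_{k+3}:Q^{(1)}\cap R\ne\emptyset\}$. *)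

theory Defs
  imports "HOL-Analysis.Analysis"
begin

type_synonym 'n cube = "(real^'n) set"

definition hcube :: "real^('n::finite) \<Rightarrow> real \<Rightarrow> 'n cube" where
  "hcube a l = {x. \<forall>i. a$i \<le> x$i \<and> x$i < a$i + l}"

definition dyadic_grid :: "('n::finite) cube set \<Rightarrow> bool" where
  "dyadic_grid D \<longleftrightarrow> (\<exists>G :: int \<Rightarrow> 'n cube set.
      D = (\<Union>j. G j)
    \<and> (\<forall>j. \<forall>Q\<in>G j. \<exists>a. Q = hcube a (2 powr (- real_of_int j)))
    \<and> (\<forall>j x. \<exists>!Q. Q \<in> G j \<and> x \<in> Q)
    \<and> (\<forall>j. \<forall>Q\<in>G (j+1). \<exists>P\<in>G j. Q \<subseteq> P))"

definition parent :: "('n::finite) cube set \<Rightarrow> 'n cube \<Rightarrow> 'n cube" where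
  "parent D Q = (THE P. P \<in> D \<and> Q \<subset> P \<and> (\<forall>P'\<in>D. Q \<subset> P' \<longrightarrow> P \<subseteq> P'))"

text \<open>Average E_P(g) = |P|^{-1} \<integral>_P g of a nonnegative function (finite in all uses).\<close>
definition avg :: "('n::finite) cube \<Rightarrow> (real^'n \<Rightarrow> real) \<Rightarrow> real" where
  "avg P g = enn2real (\<integral>\<^sup>+ x. ennreal (g x) * indicator P x \<partial>lebesgue) / measure lebesgue P"

definition wmeas :: "(real^('n::finite) \<Rightarrow> real) \<Rightarrow> (real^'n) set \<Rightarrow> ennreal" where
  "wmeas w E = (\<integral>\<^sup>+ x. ennreal (w x) * indicator E x \<partial>lebesgue)"

definition Tbar :: "('n::finite) cube set \<Rightarrow> ('n cube \<Rightarrow> real) \<Rightarrow> real \<Rightarrow> (real^'n \<Rightarrow> real)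
    \<Rightarrow> (real^'n \<Rightarrow> real) \<Rightarrow> real^'n \<Rightarrow> ennreal" where
  "Tbar Qs \<tau> q f \<sigma> x =
     (let S = (\<Sum>\<^sub>\<infinity>P\<in>Qs. ennreal (\<bar>\<tau> P * avg P (\<lambda>y. f y * \<sigma> y) * indicator P x\<bar> powr q))
      in if S = \<infinity> then \<infinity> else ennreal (enn2real S powr (1 / q)))"

definition aP :: "('n::finite) cube set \<Rightarrow> ('n cube \<Rightarrow> real) \<Rightarrow> real \<Rightarrow> (real^'n \<Rightarrow> real)
    \<Rightarrow> (real^'n \<Rightarrow> real) \<Rightarrow> 'n cube \<Rightarrow> real^'n \<Rightarrow> real" where
  "aP Qs \<tau> q f \<sigma> P x =
     (let T = Tbar Qs \<tau> q f \<sigma> x; q' = q / (q - 1) in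
      if T = 0 \<or> T = \<infinity> then 0
      else (avg P (\<lambda>y. f y * \<sigma> y) * \<tau> P) powr (q - 1) * indicator P x
           * enn2real T powr (- 1 / q'))"

definition Uop :: "('n::finite) cube set \<Rightarrow> ('n cube \<Rightarrow> real) \<Rightarrow> ('n cube \<Rightarrow> real^'n \<Rightarrow> real)
    \<Rightarrow> (real^'n \<Rightarrow> real) \<Rightarrow> real^'n \<Rightarrow> ennreal" where
  "Uop Qs \<tau> g w x = (\<Sum>\<^sub>\<infinity>P\<in>Qs. ennreal (avg P (\<lambda>y. g P y * w y) * \<tau> P * indicator P x))"

definition Omega :: "('n::finite) cube set \<Rightarrow> ('n cube \<Rightarrow> real) \<Rightarrow> real \<Rightarrow> (real^'n \<Rightarrow> real)
    \<Rightarrow> (real^'n \<Rightarrow> real) \<Rightarrow> int \<Rightarrow> (real^'n) set" where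
  "Omega Qs \<tau> q f \<sigma> k = {x. Tbar Qs \<tau> q f \<sigma> x > ennreal (2 powr real_of_int k)}"

definition Ek :: "('n::finite) cube set \<Rightarrow> ('n cube \<Rightarrow> real) \<Rightarrow> real \<Rightarrow> (real^'n \<Rightarrow> real)
    \<Rightarrow> (real^'n \<Rightarrow> real) \<Rightarrow> int \<Rightarrow> 'n cube \<Rightarrow> (real^'n) set" where
  "Ek Qs \<tau> q f \<sigma> k Q = Q \<inter> (Omega Qs \<tau> q f \<sigma> (k+2) - Omega Qs \<tau> q f \<sigma> (k+3))"

definition UE :: "('n::finite) cube set \<Rightarrow> ('n cube \<Rightarrow> real) \<Rightarrow> real \<Rightarrow> (real^'n \<Rightarrow> real)
    \<Rightarrow> (real^'n \<Rightarrow> real) \<Rightarrow> (real^'n \<Rightarrow> real) \<Rightarrow> int \<Rightarrow> 'n cube \<Rightarrow> real^'n \<Rightarrow> ennreal" where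
  "UE Qs \<tau> q f \<sigma> w k Q =
     Uop Qs \<tau> (\<lambda>P y. aP Qs \<tau> q f \<sigma> P y * indicator (Ek Qs \<tau> q f \<sigma> k Q) y) w"

definition alpha :: "('n::finite) cube set \<Rightarrow> 'n cube set \<Rightarrow> ('n cube \<Rightarrow> real) \<Rightarrow> real \<Rightarrow> (real^'n \<Rightarrow> real)
    \<Rightarrow> (real^'n \<Rightarrow> real) \<Rightarrow> (real^'n \<Rightarrow> real) \<Rightarrow> int \<Rightarrow> 'n cube \<Rightarrow> ennreal" where
  "alpha D Qs \<tau> q f \<sigma> w k Q =
     (\<integral>\<^sup>+ x. ennreal (f x) * UE Qs \<tau> q f \<sigma> w k Q x * ennreal (\<sigma> x)
        * indicator (parent D Q - Omega Qs \<tau> q f \<sigma> (k+3)) x \<partial>lebesgue)"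

definition beta :: "('n::finite) cube set \<Rightarrow> 'n cube set \<Rightarrow> ('n cube \<Rightarrow> real) \<Rightarrow> real \<Rightarrow> (real^'n \<Rightarrow> real)
    \<Rightarrow> (real^'n \<Rightarrow> real) \<Rightarrow> (real^'n \<Rightarrow> real) \<Rightarrow> int \<Rightarrow> 'n cube \<Rightarrow> ennreal" where
  "beta D Qs \<tau> q f \<sigma> w k Q =
     (\<integral>\<^sup>+ x. ennreal (f x) * UE Qs \<tau> q f \<sigma> w k Q x * ennreal (\<sigma> x)
        * indicator (parent D Q \<inter> Omega Qs \<tau> q f \<sigma> (k+3)) x \<partial>lebesgue)"

text \<open>\<Q>^3_k, relative to the chosen Whitney families Qf k = \<Q>_k.\<close>
definition Q3 :: "('n::finite) cube set \<Rightarrow> 'n cube set \<Rightarrow> ('n cube \<Rightarrow> real) \<Rightarrow> real \<Rightarrow> (real^'n \<Rightarrow> real)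
    \<Rightarrow> (real^'n \<Rightarrow> real) \<Rightarrow> (real^'n \<Rightarrow> real) \<Rightarrow> real \<Rightarrow> (int \<Rightarrow> 'n cube set) \<Rightarrow> int \<Rightarrow> 'n cube set" where
  "Q3 D Qs \<tau> q f \<sigma> w \<eta> Qf k = {Q \<in> Qf k.
      wmeas w (Ek Qs \<tau> q f \<sigma> k Q) > ennreal \<eta> * wmeas w Q
    \<and> alpha D Qs \<tau> q f \<sigma> w k Q \<le> beta D Qs \<tau> q f \<sigma> w k Q}"

definition Rk :: "('n::finite) cube set \<Rightarrow> (int \<Rightarrow> 'n cube set) \<Rightarrow> int \<Rightarrow> 'n cube \<Rightarrow> 'n cube set" where
  "Rk D Qf k Q = {R \<in> Qf (k+3). parent D Q \<inter> R \<noteq> {}}"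

definition whitney_families :: "('n::finite) cube set \<Rightarrow> (int \<Rightarrow> (real^'n) set) \<Rightarrow> real \<Rightarrow> real
    \<Rightarrow> (int \<Rightarrow> 'n cube set) \<Rightarrow> bool" where
  "whitney_families D \<Omega> C1 C2 Qf \<longleftrightarrow>
     (\<forall>k. Qf k \<subseteq> D
        \<and> (\<forall>Q\<in>Qf k. \<forall>Q'\<in>Qf k. Q \<noteq> Q' \<longrightarrow> Q \<inter> Q' = {})
        \<and> \<Union>(Qf k) = \<Omega> k
        \<and> (\<forall>Q\<in>Qf k. parent D Q \<subseteq> \<Omega> k \<and> parent D (parent D Q) \<inter> - \<Omega> k \<noteq> {})
        \<and> (\<forall>x. finite {Q\<in>Qf k. x \<in> parent D Q}
               \<and> real (card {Q\<in>Qf k. x \<in> parent D Q}) \<le> C1 * indicator (\<Omega> k) x)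
        \<and> (\<forall>Q\<in>Qf k. finite {Q'\<in>Qf k. Q' \<inter> parent D Q \<noteq> {}}
               \<and> real (card {Q'\<in>Qf k. Q' \<inter> parent D Q \<noteq> {}}) \<le> C2))
   \<and> (\<forall>k l Q Q'. Q \<in> Qf k \<longrightarrow> Q' \<in> Qf l \<longrightarrow> Q \<subset> Q' \<longrightarrow> k > l)"

end

theory Submission
  imports Defs
begin


lemma hcube_in: "0 < l \<Longrightarrow> a \<in> hcube a l"
  by (simp add: hcube_def)

lemma hcube_side_eq:
  assumes "0 < l" "0 < m" "hcube (a::real^'n::finite) l = hcube b m"
  shows "l = m"
proof -
  have "a \<in> hcube b m" using assms hcube_in by metis
  moreover have "b \<in> hcube a l" using assms hcube_in by metis
  ultimately have ab: "a = b" by (auto simp: hcube_def vec_eq_iff intro: order_antisym)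
  show ?thesis
  proof (rule ccontr)
    assume "l \<noteq> m"
    then consider "l < m" | "m < l" by linarith
    then show False
    proof cases
      case 1
      let ?x = "a + (\<chi> i. l)"
      have "?x \<in> hcube b m" using 1 assms ab by (simp add: hcube_def)
      moreover have "?x \<notin> hcube a l" by (simp add: hcube_def)
      ultimately show False using assms by simp
    next
      case 2
      let ?x = "a + (\<chi> i. m)"
      have "?x \<in> hcube a l" using 2 assms(2) by (simp add: hcube_def)
      then have "?x \<in> hcube b m" using assms(3) by simp
      moreover have "?x \<notin> hcube b m" using ab by (simp add: hcube_def)
      ultimately show False by simp
    qed
  qed
qed

locale dgrid =
  fixes D :: "('n::finite) cube set" and G :: "int \<Rightarrow> 'n cube set"
  assumes D_eq: "D = (\<Union>j. G j)"
    and G_cube: "\<And>j Q. Q \<in> G j \<Longrightarrow> \<exists>a. Q = hcube a (2 powr (- real_of_int j))"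
    and G_part: "\<And>j x. \<exists>!Q. Q \<in> G j \<and> x \<in> Q"
    and G_nest: "\<And>j Q. Q \<in> G (j+1) \<Longrightarrow> \<exists>P\<in>G j. Q \<subseteq> P"
begin

lemma G_nonempty: "Q \<in> G j \<Longrightarrow> Q \<noteq> {}"
proof -
  assume "Q \<in> G j"
  then obtain a where "Q = hcube a (2 powr (- real_of_int j))" using G_cube by blast
  moreover have "a \<in> hcube a (2 powr (- real_of_int j))" by (rule hcube_in) simp
  ultimately show ?thesis by blast
qed

lemma G_uniq: "P \<in> G j \<Longrightarrow> Q \<in> G j \<Longrightarrow> x \<in> P \<Longrightarrow> x \<in> Q \<Longrightarrow> P = Q"
  using G_part[of j x] by blast

lemma anc_nat: "Q \<in> G (j + int n) \<Longrightarrow> \<exists>P\<in>G j. Q \<subseteq> P"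
proof (induction n arbitrary: Q)
  case 0 then show ?case by auto
next
  case (Suc n)
  have "Q \<in> G ((j + int n) + 1)" using Suc.prems by (simp add: ac_simps)
  then obtain P where P: "P \<in> G (j + int n)" "Q \<subseteq> P" using G_nest by blast
  obtain P' where "P' \<in> G j" "P \<subseteq> P'" using Suc.IH[OF P(1)] by blast
  then show ?case using P(2) by (meson order_trans)
qed

lemma anc: "Q \<in> G i \<Longrightarrow> j \<le> i \<Longrightarrow> \<exists>P\<in>G j. Q \<subseteq> P"
  using anc_nat[of Q j "nat (i - j)"] by simp

lemma nested_G: "Q \<in> G i \<Longrightarrow> P \<in> G j \<Longrightarrow> j \<le> i \<Longrightarrow> P \<inter> Q \<noteq> {} \<Longrightarrow> Q \<subseteq> P"
proof -
  assume a: "Q \<in> G i" "P \<in> G j" "j \<le> i" "P \<inter> Q \<noteq> {}"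
  then obtain P' where P': "P' \<in> G j" "Q \<subseteq> P'" using anc by blast
  from a obtain x where "x \<in> P" "x \<in> Q" by blast
  with P' a have "P' = P" using G_uniq by blast
  with P' show ?thesis by simp
qed

lemma nested: "P \<in> D \<Longrightarrow> Q \<in> D \<Longrightarrow> P \<inter> Q \<noteq> {} \<Longrightarrow> P \<subseteq> Q \<or> Q \<subseteq> P"
proof -
  assume a: "P \<in> D" "Q \<in> D" "P \<inter> Q \<noteq> {}"
  then obtain i j where "Q \<in> G i" "P \<in> G j" using D_eq by blast
  then show ?thesis using nested_G a
    by (metis inf_commute linorder_le_cases)
qed

lemma D_nonempty: "Q \<in> D \<Longrightarrow> Q \<noteq> {}"
  using D_eq G_nonempty by blast

lemma parent_prop:
  assumes "Q \<in> D"
  shows "parent D Q \<in> D \<and> Q \<subset> parent D Q \<and> (\<forall>P'\<in>D. Q \<subset> P' \<longrightarrow> parent D Q \<subseteq> P')"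
proof -
  obtain i where Qi: "Q \<in> G i" using assms D_eq by blast
  have "i = (i - 1) + 1" by simp
  then obtain P where P: "P \<in> G (i - 1)" "Q \<subseteq> P" using G_nest Qi by metis
  have "Q \<noteq> P"
  proof
    assume "Q = P"
    obtain a b where "Q = hcube a (2 powr (- real_of_int i))" "P = hcube b (2 powr (- real_of_int (i - 1)))"
      using G_cube Qi P by metis
    then have "2 powr (- real_of_int i) = 2 powr (- real_of_int (i - 1))"
      using hcube_side_eq[of "2 powr (- real_of_int i)" "2 powr (- real_of_int (i - 1))" a b] \<open>Q = P\<close> by simp
    then have "- real_of_int i = - real_of_int (i - 1)"
      using powr_inj[of 2 "- real_of_int i" "- real_of_int (i - 1)"] by simp
    then show False by simp
  qed
  with P have QP: "Q \<subset> P" by blast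
  have PD: "P \<in> D" using P D_eq by blast
  have minP: "P \<subseteq> P'" if P'D: "P' \<in> D" and QP': "Q \<subset> P'" for P'
  proof -
    have "Q \<noteq> {}" using Qi G_nonempty by blast
    then have "P \<inter> P' \<noteq> {}" using P that by blast
    then have "P \<subseteq> P' \<or> P' \<subseteq> P" using nested PD that by blast
    moreover
    { assume "P' \<subseteq> P"
      obtain j where Pj: "P' \<in> G j" using P'D D_eq by blast
      have "P \<subseteq> P'"
      proof (cases "i \<le> j")
        case True
        then obtain A where A: "A \<in> G i" "P' \<subseteq> A" using anc Pj by blast
        then have "A \<inter> Q \<noteq> {}" using QP' \<open>Q \<noteq> {}\<close> by blast
        then have "A = Q" using A Qi G_uniq by blast
        then show ?thesis using A QP' by blast
      next
        case False
        then have "P' \<inter> P \<noteq> {}" using \<open>P \<inter> P' \<noteq> {}\<close> by blast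
        then show ?thesis using nested_G[OF P(1) Pj] False by simp
      qed }
    ultimately show ?thesis by blast
  qed
  have "parent D Q = P"
    unfolding parent_def
  proof (rule the_equality)
    show "P \<in> D \<and> Q \<subset> P \<and> (\<forall>P'\<in>D. Q \<subset> P' \<longrightarrow> P \<subseteq> P')" using PD QP minP by blast
  next
    fix P1 assume "P1 \<in> D \<and> Q \<subset> P1 \<and> (\<forall>P'\<in>D. Q \<subset> P' \<longrightarrow> P1 \<subseteq> P')"
    then show "P1 = P" using minP PD QP by blast
  qed
  then show ?thesis using PD QP minP by blast
qed

end

lemma dyadic_grid_dgrid: "dyadic_grid D \<Longrightarrow> \<exists>G. dgrid D G"
proof -
  assume "dyadic_grid D"
  then obtain G where H: "D = (\<Union>j. G j)
    \<and> (\<forall>j. \<forall>Q\<in>G j. \<exists>a. Q = hcube a (2 powr (- real_of_int j)))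
    \<and> (\<forall>j x. \<exists>!Q. Q \<in> G j \<and> x \<in> Q)
    \<and> (\<forall>j. \<forall>Q\<in>G (j+1). \<exists>P\<in>G j. Q \<subseteq> P)" unfolding dyadic_grid_def by (rule exE)
  have "dgrid D G"
  proof
    show "D = (\<Union>j. G j)" using H by (rule conjunct1)
    show "\<exists>a. Q = hcube a (2 powr (- real_of_int j))" if "Q \<in> G j" for j Q
      using H[THEN conjunct2, THEN conjunct1] that by blast
    show "\<exists>!Q. Q \<in> G j \<and> x \<in> Q" for j x
      using H[THEN conjunct2, THEN conjunct2, THEN conjunct1] by blast
    show "\<exists>P\<in>G j. Q \<subseteq> P" if "Q \<in> G (j+1)" for j Q
      using H[THEN conjunct2, THEN conjunct2, THEN conjunct2] that by blast
  qed
  then show ?thesis by blast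
qed

locale wsetup = dgrid D G for D :: "('n::finite) cube set" and G +
  fixes \<Omega> :: "int \<Rightarrow> (real^'n) set" and C1 C2 :: real and Qf and R
  assumes W: "whitney_families D \<Omega> C1 C2 Qf"
    and mono\<Omega>: "\<And>k k'. k \<le> k' \<Longrightarrow> \<Omega> k' \<subseteq> \<Omega> k"
    and RD: "R \<in> D"
begin

lemmas Wk = W[unfolded whitney_families_def, THEN conjunct1, THEN spec]

lemma Wsub: "Qf k \<subseteq> D" using Wk[of k, THEN conjunct1] .
lemma Wun: "\<Union>(Qf k) = \<Omega> k" using Wk[of k, THEN conjunct2, THEN conjunct2, THEN conjunct1] .
lemma Wpar: "Q \<in> Qf k \<Longrightarrow> parent D Q \<subseteq> \<Omega> k \<and> parent D (parent D Q) \<inter> - \<Omega> k \<noteq> {}"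
  using Wk[of k, THEN conjunct2, THEN conjunct2, THEN conjunct2, THEN conjunct1] by (rule bspec)
lemma WC2: "Q \<in> Qf k \<Longrightarrow> finite {Q'\<in>Qf k. Q' \<inter> parent D Q \<noteq> {}}
               \<and> real (card {Q'\<in>Qf k. Q' \<inter> parent D Q \<noteq> {}}) \<le> C2"
  using Wk[of k, THEN conjunct2, THEN conjunct2, THEN conjunct2, THEN conjunct2, THEN conjunct2] by (rule bspec)
lemma Wstrict: "Q \<in> Qf k \<Longrightarrow> Q' \<in> Qf l \<Longrightarrow> Q \<subset> Q' \<Longrightarrow> k > l"
  by (rule W[unfolded whitney_families_def, THEN conjunct2, rule_format])

definition good where
  "good Q k \<longleftrightarrow> Q \<in> Qf k \<and> R \<in> Qf (k+3) \<and> parent D Q \<inter> R \<noteq> {}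
     \<and> Q \<inter> (\<Omega> (k+2) - \<Omega> (k+3)) \<noteq> {}"

lemma key:
  assumes "good Q k"
  shows "parent D (parent D R) \<subseteq> parent D Q \<and> parent D Q \<subseteq> \<Omega> k"
proof -
  from assms have Qk: "Q \<in> Qf k" and Rk3: "R \<in> Qf (k+3)" and PR: "parent D Q \<inter> R \<noteq> {}"
    and QE: "Q \<inter> (\<Omega> (k+2) - \<Omega> (k+3)) \<noteq> {}" unfolding good_def by auto
  have QD: "Q \<in> D" using Qk Wsub by blast
  define P where "P = parent D Q"
  have P: "P \<in> D" "Q \<subset> P" "\<forall>P'\<in>D. Q \<subset> P' \<longrightarrow> P \<subseteq> P'" using parent_prop[OF QD] P_def by auto
  have R3: "R \<subseteq> \<Omega> (k+3)" using Rk3 Wun by blast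
  have "\<Omega> (k+3) \<subseteq> \<Omega> k" by (rule mono\<Omega>) simp
  then have RO: "R \<subseteq> \<Omega> k" using R3 by blast
  have PO: "P \<subseteq> \<Omega> k" "parent D P \<inter> - \<Omega> k \<noteq> {}" using Wpar[OF Qk] P_def by auto
  have PP: "parent D P \<in> D" "P \<subset> parent D P" "\<forall>P'\<in>D. P \<subset> P' \<longrightarrow> parent D P \<subseteq> P'"
    using parent_prop[OF P(1)] by auto
  have PRn: "P \<subseteq> R \<or> R \<subseteq> P" using nested[OF P(1) RD] PR P_def by blast
  have RP: "R \<subset> P"
  proof -
    have False if "P \<subseteq> R"
    proof (cases "P = R")
      case True
      then show False using Wstrict[OF Qk Rk3] P(2) by simp
    next
      case False
      then have "parent D P \<subseteq> R" using PP(3) RD that by blast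
      then show False using PO(2) RO by blast
    qed
    then show ?thesis using PRn by blast
  qed
  define R1 where "R1 = parent D R"
  have R1: "R1 \<in> D" "R \<subset> R1" "\<forall>P'\<in>D. R \<subset> P' \<longrightarrow> R1 \<subseteq> P'" using parent_prop[OF RD] R1_def by auto
  have "R1 \<subseteq> P" using R1(3) RP P(1) by blast
  have "R1 \<noteq> P"
  proof
    assume "R1 = P"
    have "R1 \<subseteq> \<Omega> (k+3)" using Wpar[OF Rk3] R1_def by simp
    then show False using QE P(2) \<open>R1 = P\<close> by blast
  qed
  then have "R1 \<subset> P" using \<open>R1 \<subseteq> P\<close> by blast
  then have "parent D R1 \<subseteq> P" using parent_prop[OF R1(1)] P(1) by blast
  then show ?thesis using PO(1) P_def R1_def by simp
qed

lemma window:
  assumes "good Q k" "good Q' k'"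
  shows "k' < k + 3"
proof (rule ccontr)
  assume "\<not> k' < k + 3"
  then have "\<Omega> k' \<subseteq> \<Omega> (k+3)" by (intro mono\<Omega>) simp
  moreover have "parent D (parent D R) \<subseteq> \<Omega> k'" using key[OF assms(2)] by blast
  moreover have "R \<in> Qf (k+3)" using assms(1) good_def by blast
  then have "parent D (parent D R) \<inter> - \<Omega> (k+3) \<noteq> {}" using Wpar by blast
  ultimately show False by blast
qed

lemma level:
  assumes "good Q k" "good Q' k"
  shows "Q' \<in> {Q'\<in>Qf k. Q' \<inter> parent D Q \<noteq> {}}"
proof -
  have Qk: "Q \<in> Qf k" and Q'k: "Q' \<in> Qf k" using assms good_def by auto
  have QD: "Q \<in> D" and Q'D: "Q' \<in> D" using Qk Q'k Wsub by auto
  define P where "P = parent D Q"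
  define P' where "P' = parent D Q'"
  have P: "P \<in> D" "Q \<subset> P" using parent_prop[OF QD] P_def by auto
  have P': "P' \<in> D" "Q' \<subset> P'" using parent_prop[OF Q'D] P'_def by auto
  have R1D: "parent D R \<in> D" using parent_prop[OF RD] by blast
  have R2D: "parent D (parent D R) \<in> D" using parent_prop[OF R1D] by blast
  have "parent D (parent D R) \<noteq> {}" using D_nonempty R2D by blast
  then have "P \<inter> P' \<noteq> {}" using key[OF assms(1)] key[OF assms(2)] P_def P'_def by blast
  then have nest: "P \<subseteq> P' \<or> P' \<subseteq> P" using nested P(1) P'(1) by blast
  have PO: "P \<subseteq> \<Omega> k" "parent D P \<inter> - \<Omega> k \<noteq> {}" using Wpar[OF Qk] P_def by auto
  have P'O: "P' \<subseteq> \<Omega> k" "parent D P' \<inter> - \<Omega> k \<noteq> {}" using Wpar[OF Q'k] P'_def by auto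
  have "P = P'"
  proof (rule ccontr)
    assume ne: "P \<noteq> P'"
    show False
    proof (cases "P \<subseteq> P'")
      case True
      then have "parent D P \<subseteq> P'" using parent_prop[OF P(1)] P'(1) ne by blast
      then show False using PO P'O by blast
    next
      case False
      then have "P' \<subseteq> P" using nest by blast
      then have "parent D P' \<subseteq> P" using parent_prop[OF P'(1)] P(1) ne by blast
      then show False using PO P'O by blast
    qed
  qed
  have "Q' \<noteq> {}" using D_nonempty Q'D by blast
  then show ?thesis using P' \<open>P = P'\<close> Q'k P_def by blast
qed

lemma count:
  "finite {(Q, k). good Q k} \<and> real (card {(Q, k). good Q k}) \<le> 5 * \<bar>C2\<bar>"
proof (cases "{(Q, k). good Q k} = {}")
  case True then show ?thesis by simp
next
  case False
  then obtain Q0 k0 where g0: "good Q0 k0" by auto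
  define B where "B k = (if \<exists>Q. good Q k then {Q'\<in>Qf k. Q' \<inter> parent D (SOME Q. good Q k) \<noteq> {}} else {})" for k
  define I where "I = {k0 - 2 .. k0 + 2}"
  have Bfin: "finite (B k) \<and> real (card (B k)) \<le> \<bar>C2\<bar>" for k
  proof (cases "\<exists>Q. good Q k")
    case True
    then have "good (SOME Q. good Q k) k" by (rule someI_ex)
    then have "(SOME Q. good Q k) \<in> Qf k" using good_def by blast
    from WC2[OF this] True show ?thesis unfolding B_def by auto
  next
    case False then show ?thesis unfolding B_def by simp
  qed
  have sub: "{(Q, k). good Q k} \<subseteq> (\<Union>k\<in>I. (\<lambda>Q. (Q, k)) ` B k)"
  proof
    fix x assume "x \<in> {(Q, k). good Q k}"
    then obtain Q k where x: "x = (Q, k)" and g: "good Q k" by auto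
    have "k < k0 + 3" "k0 < k + 3" using window[OF g0 g] window[OF g g0] by auto
    then have "k \<in> I" using I_def by auto
    moreover have "Q \<in> B k"
    proof -
      have ex: "\<exists>Q. good Q k" using g by blast
      then have "good (SOME Q. good Q k) k" by (rule someI_ex)
      from level[OF this g] ex show ?thesis unfolding B_def by simp
    qed
    ultimately show "x \<in> (\<Union>k\<in>I. (\<lambda>Q. (Q, k)) ` B k)" using x by blast
  qed
  have finI: "finite I" using I_def by simp
  have finU: "finite (\<Union>k\<in>I. (\<lambda>Q. (Q, k)) ` B k)" using finI Bfin by auto
  have "card {(Q, k). good Q k} \<le> card (\<Union>k\<in>I. (\<lambda>Q. (Q, k)) ` B k)"
    using card_mono[OF finU sub] .
  also have "\<dots> \<le> (\<Sum>k\<in>I. card ((\<lambda>Q. (Q, k)) ` B k))" by (rule card_UN_le[OF finI])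
  also have "\<dots> \<le> (\<Sum>k\<in>I. card (B k))" by (rule sum_mono) (rule card_image_le, use Bfin in blast)
  finally have "real (card {(Q, k). good Q k}) \<le> real (\<Sum>k\<in>I. card (B k))"
    by (simp only: of_nat_le_iff)
  also have "\<dots> = (\<Sum>k\<in>I. real (card (B k)))" by simp
  also have "\<dots> \<le> (\<Sum>k\<in>I. \<bar>C2\<bar>)" by (rule sum_mono) (use Bfin in blast)
  also have "\<dots> = 5 * \<bar>C2\<bar>" using I_def by simp
  finally show ?thesis using finite_subset[OF sub finU] by simp
qed

end

lemma Omega_mono:
  "k \<le> k' \<Longrightarrow> Omega Qs \<tau> q f \<sigma> k' \<subseteq> Omega Qs \<tau> q f \<sigma> k"
proof
  fix x assume kk: "k \<le> k'" and x: "x \<in> Omega Qs \<tau> q f \<sigma> k'"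
  have "(2::real) powr real_of_int k \<le> 2 powr real_of_int k'" using kk by simp
  then have "ennreal (2 powr real_of_int k) \<le> ennreal (2 powr real_of_int k')"
    by (rule ennreal_leI)
  then show "x \<in> Omega Qs \<tau> q f \<sigma> k" using x unfolding Omega_def
    using le_less_trans by blast
qed

lemma wmeas_empty: "wmeas w {} = 0"
  unfolding wmeas_def by simp

theorem theorem3p10:
  fixes \<eta> C1 C2 :: real
  assumes "0 < \<eta>" and "\<eta> < 1"
  shows "\<exists>C::real. \<forall>(D :: ('n::finite) cube set) (Qs :: 'n cube set) (\<tau> :: 'n cube \<Rightarrow> real)
            (\<sigma> :: real^'n \<Rightarrow> real) (w :: real^'n \<Rightarrow> real) (q :: real) (f :: real^'n \<Rightarrow> real)
            (Qf :: int \<Rightarrow> 'n cube set) (R :: 'n cube).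
      dyadic_grid D \<and> Qs \<subseteq> D \<and> (\<forall>P\<in>Qs. 0 \<le> \<tau> P)
    \<and> (\<forall>x. 0 < \<sigma> x) \<and> \<sigma> \<in> borel_measurable lebesgue
    \<and> (\<forall>K. compact K \<longrightarrow> set_integrable lebesgue K \<sigma>)
    \<and> (\<forall>x. 0 < w x) \<and> w \<in> borel_measurable lebesgue
    \<and> (\<forall>K. compact K \<longrightarrow> set_integrable lebesgue K w)
    \<and> 1 < q
    \<and> (\<forall>x. 0 \<le> f x) \<and> f \<in> borel_measurable lebesgue \<and> (\<exists>M. \<forall>x. f x \<le> M)
    \<and> (\<exists>K. compact K \<and> (\<forall>x. x \<notin> K \<longrightarrow> f x = 0))
    \<and> whitney_families D (Omega Qs \<tau> q f \<sigma>) C1 C2 Qf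
    \<and> R \<in> D
    \<longrightarrow> finite {(Q, k). Q \<in> Q3 D Qs \<tau> q f \<sigma> w \<eta> Qf k \<and> R \<in> Rk D Qf k Q}
      \<and> real (card {(Q, k). Q \<in> Q3 D Qs \<tau> q f \<sigma> w \<eta> Qf k \<and> R \<in> Rk D Qf k Q}) \<le> C"
proof (intro exI[of _ "5 * \<bar>C2\<bar>"] allI impI)
  fix D :: "('n::finite) cube set" and Qs :: "'n cube set" and \<tau> :: "'n cube \<Rightarrow> real"
    and \<sigma> w :: "real^'n \<Rightarrow> real" and q :: real and f :: "real^'n \<Rightarrow> real"
    and Qf :: "int \<Rightarrow> 'n cube set" and R :: "'n cube"
  assume H: "dyadic_grid D \<and> Qs \<subseteq> D \<and> (\<forall>P\<in>Qs. 0 \<le> \<tau> P)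
    \<and> (\<forall>x. 0 < \<sigma> x) \<and> \<sigma> \<in> borel_measurable lebesgue
    \<and> (\<forall>K. compact K \<longrightarrow> set_integrable lebesgue K \<sigma>)
    \<and> (\<forall>x. 0 < w x) \<and> w \<in> borel_measurable lebesgue
    \<and> (\<forall>K. compact K \<longrightarrow> set_integrable lebesgue K w)
    \<and> 1 < q
    \<and> (\<forall>x. 0 \<le> f x) \<and> f \<in> borel_measurable lebesgue \<and> (\<exists>M. \<forall>x. f x \<le> M)
    \<and> (\<exists>K. compact K \<and> (\<forall>x. x \<notin> K \<longrightarrow> f x = 0))
    \<and> whitney_families D (Omega Qs \<tau> q f \<sigma>) C1 C2 Qf
    \<and> R \<in> D"
  have dg: "dyadic_grid D" using H by (rule conjunct1)
  have Wf: "whitney_families D (Omega Qs \<tau> q f \<sigma>) C1 C2 Qf" and RD: "R \<in> D"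
    using H by blast+
  obtain G where G: "dgrid D G" using dyadic_grid_dgrid[OF dg] by blast
  interpret ws: wsetup D G "Omega Qs \<tau> q f \<sigma>" C1 C2 Qf R
  proof (rule wsetup.intro[OF G])
    show "wsetup_axioms D (Omega Qs \<tau> q f \<sigma>) C1 C2 Qf R"
      by (unfold_locales) (use Wf RD Omega_mono in blast)+
  qed
  have sub: "{(Q, k). Q \<in> Q3 D Qs \<tau> q f \<sigma> w \<eta> Qf k \<and> R \<in> Rk D Qf k Q} \<subseteq> {(Q, k). ws.good Q k}"
  proof safe
    fix Q k assume Q3: "Q \<in> Q3 D Qs \<tau> q f \<sigma> w \<eta> Qf k" and Rk: "R \<in> Rk D Qf k Q"
    have Qk: "Q \<in> Qf k" and wm: "wmeas w (Ek Qs \<tau> q f \<sigma> k Q) > ennreal \<eta> * wmeas w Q"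
      using Q3 unfolding Q3_def by auto
    have "Ek Qs \<tau> q f \<sigma> k Q \<noteq> {}"
    proof
      assume "Ek Qs \<tau> q f \<sigma> k Q = {}"
      then show False using wm by (simp add: wmeas_empty)
    qed
    then show "ws.good Q k" using Qk Rk unfolding ws.good_def Rk_def Ek_def by auto
  qed
  from ws.count have "finite {(Q, k). ws.good Q k}" "real (card {(Q, k). ws.good Q k}) \<le> 5 * \<bar>C2\<bar>"
    by auto
  then show "finite {(Q, k). Q \<in> Q3 D Qs \<tau> q f \<sigma> w \<eta> Qf k \<and> R \<in> Rk D Qf k Q}
      \<and> real (card {(Q, k). Q \<in> Q3 D Qs \<tau> q f \<sigma> w \<eta> Qf k \<and> R \<in> Rk D Qf k Q}) \<le> 5 * \<bar>C2\<bar>"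
    using finite_subset[OF sub] card_mono[OF _ sub]
    by (meson of_nat_le_iff order_trans)
qed

end
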